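(* Let $M$ be a finitely presented $n$-parameter persistence module. For all $j\geq1$, if $\vec s\in\xi_{j+1}(M)$ then there exist $\vec r_i\in\xi_j(M)$ such that $\vec s=\bigvee_i\vec r_i$. Consequently, for each coordinate $k\in\{1,\dots,n\}$ the set of $k$-th coordinates of points of $\bigcup_i\xi_i(M)$ equals the set of $k$-th coordinates of points of $\xi_0(M)\cup\xi_1(M)$; i.e. the multiparameter Betti grid of $M$ is determined by $\xi_0(M)\cup\xi_1(M)$.
   Context: Modules are $\mathbb{R}^n$-graded modules over $P_n$, the monoid ring over a field $\mathbb{F}$ of $([0,\infty)^n,+)$; finitely presented means a quotient of a finitely generated free graded module by a finitely generated homogeneous submodule. Let $I\subset P_n$ be the ideal generated by the monomials $\vec x^{\vec a}$, $\vec a\neq0$. $\xi_i(M)(\vec a)=\dim_{\mathbb F}\mathrm{Tor}_i^{P_n}(M,P_n/I)_{\vec a}$, and $\xi_i(M)$ is identified with its support, i.e. the set of grades of generators of the $i$-th term of a minimal free resolution of $M$. $\vee$ denotes the join (coordinatewise maximum) in $\mathbb{R}^n$. The multiparameter Betti grid of $M$ is the product over coordinates $k$ of the sets of distinct $k$-th coordinates of points of $\bigcup_i\xi_i(M)$. *)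

theory Defs
  imports "HOL-Analysis.Analysis"
begin

text \<open>
  A finitely generated free graded module F is given by the list of grades of its
  basis elements, gr :: (real^'n) list (basis element e_j sits in grade gr!j).
  The graded piece F_a is the F-vector space with basis the e_j with gr!j <= a
  (componentwise order); we represent its elements as coefficient functions
  nat => 'f supported on those indices.

  A homogeneous P_n-linear map F' -> F (gr' the grades of F') is given by a
  coefficient matrix c :: nat => nat => 'f, namely e'_k |-> sum_j c j k * x^(gr'!k - gr!j) e_j,
  which requires c j k ~= 0 ==> gr!j <= gr'!k.  In grade a (in the basis above)
  it acts by the matrix c itself.
\<close>

definition graded_piece :: "(real^'n) list \<Rightarrow> real^'n \<Rightarrow> (nat \<Rightarrow> 'f::field) set" where
  "graded_piece gr a = {v. \<forall>j. v j \<noteq> 0 \<longrightarrow> j < length gr \<and> gr ! j \<le> a}"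

definition apply_map :: "(real^'n) list \<Rightarrow> (real^'n) list \<Rightarrow> (nat \<Rightarrow> nat \<Rightarrow> 'f::field)
    \<Rightarrow> (nat \<Rightarrow> 'f) \<Rightarrow> (nat \<Rightarrow> 'f)" where
  "apply_map gr gr' c v = (\<lambda>j. if j < length gr then (\<Sum>k<length gr'. c j k * v k) else 0)"

text \<open>
  A minimal free resolution  ... -> F_2 -> F_1 -> F_0  (of M = coker (F_1 -> F_0)):
  gr i are the grades of the basis of F_i, d i is the matrix of F_(i+1) -> F_i.
  Conditions: homogeneity; minimality (image of d_i lies in I F_i, i.e. no nonzero
  entry between generators of equal grade); exactness at every F_i, i >= 1, checked
  in every grade a (kernel = image).
\<close>

definition minimal_free_resolution ::
    "(nat \<Rightarrow> (real^'n) list) \<Rightarrow> (nat \<Rightarrow> nat \<Rightarrow> nat \<Rightarrow> 'f::field) \<Rightarrow> bool" where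
  "minimal_free_resolution gr d \<longleftrightarrow>
     (\<forall>i j k. j < length (gr i) \<longrightarrow> k < length (gr (Suc i)) \<longrightarrow> d i j k \<noteq> 0 \<longrightarrow>
         gr i ! j \<le> gr (Suc i) ! k \<and> gr i ! j \<noteq> gr (Suc i) ! k) \<and>
     (\<forall>i a. {v \<in> graded_piece (gr (Suc i)) a.
               apply_map (gr i) (gr (Suc i)) (d i) v = (\<lambda>_. 0)}
            = apply_map (gr (Suc i)) (gr (Suc (Suc i))) (d (Suc i))
                ` graded_piece (gr (Suc (Suc i))) a)"

definition xi :: "(nat \<Rightarrow> (real^'n) list) \<Rightarrow> nat \<Rightarrow> (real^'n) set" where
  "xi gr i = set (gr i)"

definition is_join :: "real^'n \<Rightarrow> (real^'n) set \<Rightarrow> bool" where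
  "is_join s R \<longleftrightarrow> finite R \<and> R \<noteq> {} \<and> (\<forall>k. s $ k = Max ((\<lambda>r. r $ k) ` R))"

end

theory Submission
  imports Defs
begin

lemma key:
  fixes gr :: "nat \<Rightarrow> (real^'n) list" and d :: "nat \<Rightarrow> nat \<Rightarrow> nat \<Rightarrow> 'f::field"
  assumes mfr: "minimal_free_resolution gr d" and j1: "j \<ge> 1"
    and sin: "s \<in> xi gr (Suc j)"
  shows "\<exists>R. R \<subseteq> xi gr j \<and> is_join s R"
proof -
  have hom: "\<And>i j k. j < length (gr i) \<Longrightarrow> k < length (gr (Suc i)) \<Longrightarrow> d i j k \<noteq> 0 \<Longrightarrow>
         gr i ! j \<le> gr (Suc i) ! k \<and> gr i ! j \<noteq> gr (Suc i) ! k"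
    using mfr unfolding minimal_free_resolution_def by blast
  have ex: "\<And>i a. {v \<in> graded_piece (gr (Suc i)) a.
               apply_map (gr i) (gr (Suc i)) (d i) v = (\<lambda>_. 0)}
            = apply_map (gr (Suc i)) (gr (Suc (Suc i))) (d (Suc i))
                ` graded_piece (gr (Suc (Suc i))) a"
    using mfr unfolding minimal_free_resolution_def by blast
  obtain idx where idx: "idx < length (gr (Suc j))" "gr (Suc j) ! idx = s"
    using sin unfolding xi_def by (metis in_set_conv_nth)
  define e :: "nat \<Rightarrow> 'f" where "e = (\<lambda>m. if m = idx then 1 else 0)"
  have e_gp: "e \<in> graded_piece (gr (Suc j)) s"
    using idx unfolding e_def graded_piece_def by auto
  define c where "c = apply_map (gr j) (gr (Suc j)) (d j) e"
  have c_eq: "\<And>m. m < length (gr j) \<Longrightarrow> c m = d j m idx"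
  proof -
    fix m assume "m < length (gr j)"
    then have "c m = (\<Sum>k<length (gr (Suc j)). d j m k * e k)"
      unfolding c_def apply_map_def by simp
    also have "\<dots> = (\<Sum>k\<in>{idx}. d j m k * e k)"
      by (rule sum.mono_neutral_right) (use idx in \<open>auto simp: e_def\<close>)
    finally show "c m = d j m idx" by (simp add: e_def)
  qed
  have c_out: "\<And>m. \<not> m < length (gr j) \<Longrightarrow> c m = 0"
    unfolding c_def apply_map_def by simp
  have h1: "\<And>m. m < length (gr j) \<Longrightarrow> c m \<noteq> 0 \<Longrightarrow> gr j ! m \<le> s \<and> gr j ! m \<noteq> s"
    using hom[of _ j idx] idx c_eq by fastforce
  obtain i where ij: "j = Suc i" using j1 by (cases j) auto
  have c_img: "c \<in> apply_map (gr (Suc i)) (gr (Suc (Suc i))) (d (Suc i)) ` graded_piece (gr (Suc (Suc i))) s"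
    unfolding c_def ij using e_gp ij by auto
  have h2: "apply_map (gr i) (gr (Suc i)) (d i) c = (\<lambda>_. 0)"
    using c_img ex[of i s] by blast
  have contra: False if tle: "t \<le> s" and tne: "t \<noteq> s" and cgp: "c \<in> graded_piece (gr j) t" for t
  proof -
    have "c \<in> {v \<in> graded_piece (gr (Suc i)) t.
               apply_map (gr i) (gr (Suc i)) (d i) v = (\<lambda>_. 0)}"
      using cgp h2 ij by simp
    then obtain w where w: "w \<in> graded_piece (gr (Suc j)) t"
      "c = apply_map (gr j) (gr (Suc j)) (d j) w"
      unfolding ex ij by blast
    define v where "v = (\<lambda>m. e m - w m)"
    have widx: "w idx = 0"
    proof (rule ccontr)
      assume "w idx \<noteq> 0"
      then have "s \<le> t" using w(1) idx unfolding graded_piece_def by auto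
      then show False using tle tne by (simp add: antisym)
    qed
    have v_gp: "v \<in> graded_piece (gr (Suc j)) s"
      using w(1) e_gp tle unfolding graded_piece_def v_def e_def
      by (auto intro: order_trans)
    have "apply_map (gr j) (gr (Suc j)) (d j) v = (\<lambda>m. c m - c m)"
    proof -
      have lin: "\<And>m. (\<Sum>k<length (gr (Suc j)). d j m k * (e k - w k))
           = (\<Sum>k<length (gr (Suc j)). d j m k * e k) - (\<Sum>k<length (gr (Suc j)). d j m k * w k)"
        by (simp add: right_diff_distrib sum_subtractf)
      show ?thesis
        unfolding v_def
      proof (intro ext)
        fix x
        show "apply_map (gr j) (gr (Suc j)) (d j) (\<lambda>m. e m - w m) x = c x - c x"
        proof (cases "x < length (gr j)")
          case True
          have cw: "c x = (\<Sum>k<length (gr (Suc j)). d j x k * w k)"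
            using fun_cong[OF w(2), of x] True unfolding apply_map_def by simp
          have ce: "c x = (\<Sum>k<length (gr (Suc j)). d j x k * e k)"
            using True unfolding c_def apply_map_def by simp
          have "apply_map (gr j) (gr (Suc j)) (d j) (\<lambda>m. e m - w m) x
              = (\<Sum>k<length (gr (Suc j)). d j x k * (e k - w k))"
            using True unfolding apply_map_def by simp
          also have "\<dots> = c x - c x" unfolding lin[of x] ce[symmetric] cw[symmetric] ..
          finally show ?thesis .
        qed (simp add: apply_map_def)
      qed
    qed
    then have "apply_map (gr j) (gr (Suc j)) (d j) v = (\<lambda>_. 0)" by simp
    with v_gp have "v \<in> apply_map (gr (Suc j)) (gr (Suc (Suc j))) (d (Suc j)) ` graded_piece (gr (Suc (Suc j))) s"
      using ex[of j s] by blast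
    then obtain u where u: "u \<in> graded_piece (gr (Suc (Suc j))) s"
      "v = apply_map (gr (Suc j)) (gr (Suc (Suc j))) (d (Suc j)) u" by blast
    have "v idx = 1" using widx by (simp add: v_def e_def)
    then have "(\<Sum>m<length (gr (Suc (Suc j))). d (Suc j) idx m * u m) = 1"
      using u(2) idx unfolding apply_map_def by (metis (no_types, lifting))
    then obtain m where m: "m < length (gr (Suc (Suc j)))" "d (Suc j) idx m * u m \<noteq> 0"
      by (metis (no_types, lifting) lessThan_iff one_neq_zero sum.neutral)
    then have "d (Suc j) idx m \<noteq> 0" "u m \<noteq> 0" by auto
    then have "gr (Suc (Suc j)) ! m \<le> s" using u(1) unfolding graded_piece_def by auto
    moreover have "s \<le> gr (Suc (Suc j)) ! m \<and> s \<noteq> gr (Suc (Suc j)) ! m"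
      using hom[of idx "Suc j" m] idx m \<open>d (Suc j) idx m \<noteq> 0\<close> by auto
    ultimately show False by (simp add: antisym)
  qed
  define R where "R = {gr j ! m | m. m < length (gr j) \<and> c m \<noteq> 0}"
  have Rsub: "R \<subseteq> xi gr j" unfolding R_def xi_def by auto
  have Rfin: "finite R" unfolding R_def by simp
  show ?thesis
  proof (cases "R = {}")
    case True
    define t :: "real^'n" where "t = (\<chi> k. s $ k - 1)"
    have "t \<le> s" unfolding t_def less_eq_vec_def by simp
    moreover have "t \<noteq> s"
    proof
      assume "t = s"
      then have "t $ k = s $ k" for k by simp
      then show False unfolding t_def by simp
    qed
    moreover have "c \<in> graded_piece (gr j) t"
      using True c_out unfolding R_def graded_piece_def by auto
    ultimately show ?thesis using contra by blast
  next
    case False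
    define t :: "real^'n" where "t = (\<chi> k. Max ((\<lambda>r. r $ k) ` R))"
    have rs: "r \<le> s" if "r \<in> R" for r
      using that h1 unfolding R_def by blast
    have "t \<le> s" unfolding less_eq_vec_def
    proof
      fix k
      have "Max ((\<lambda>r. r $ k) ` R) \<le> s $ k"
        using Rfin False rs by (simp add: less_eq_vec_def)
      then show "t $ k \<le> s $ k" unfolding t_def by simp
    qed
    moreover have "c \<in> graded_piece (gr j) t"
      unfolding graded_piece_def
    proof (intro CollectI allI impI)
      fix m assume "c m \<noteq> 0"
      then have m: "m < length (gr j)" using c_out by blast
      then have "gr j ! m \<in> R" using \<open>c m \<noteq> 0\<close> unfolding R_def by auto
      then have "gr j ! m \<le> t" unfolding t_def less_eq_vec_def using Rfin by auto
      then show "m < length (gr j) \<and> gr j ! m \<le> t" using m by simp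
    qed
    ultimately have "t = s" using contra by blast
    then have "is_join s R" unfolding is_join_def t_def using Rfin False by auto
    then show ?thesis using Rsub by blast
  qed
qed

theorem mainTheorem4:
  fixes gr :: "nat \<Rightarrow> (real^'n) list" and d :: "nat \<Rightarrow> nat \<Rightarrow> nat \<Rightarrow> 'f::field"
  assumes "minimal_free_resolution gr d"
  shows "(\<forall>j\<ge>1. \<forall>s \<in> xi gr (Suc j). \<exists>R. R \<subseteq> xi gr j \<and> is_join s R)
       \<and> (\<forall>k. (\<lambda>p. p $ k) ` (\<Union>i. xi gr i) = (\<lambda>p. p $ k) ` (xi gr 0 \<union> xi gr 1))"
proof -
  have A: "\<forall>j\<ge>1. \<forall>s \<in> xi gr (Suc j). \<exists>R. R \<subseteq> xi gr j \<and> is_join s R"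
    using key[OF assms] by blast
  have B: "p $ k \<in> (\<lambda>p. p $ k) ` (xi gr 0 \<union> xi gr 1)" if "p \<in> xi gr i" for p i k
    using that
  proof (induction i arbitrary: p rule: less_induct)
    case (less i)
    show ?case
    proof (cases "i \<le> 1")
      case True
      then have "i = 0 \<or> i = 1" by auto
      then show ?thesis using less.prems by auto
    next
      case False
      then obtain j where ij: "i = Suc j" "j \<ge> 1" by (cases i) auto
      then obtain R where R: "R \<subseteq> xi gr j" "is_join p R" using A less.prems by blast
      then have "p $ k \<in> (\<lambda>r. r $ k) ` R" unfolding is_join_def
        by (metis Max_in finite_imageI image_is_empty)
      then obtain r where "r \<in> R" "p $ k = r $ k" by auto
      then show ?thesis using less.IH[of j r] R ij by auto
    qed
  qed
  show ?thesis using A B by blast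
qed

end
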